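(* Let $p$ be a prime. Then $2p$ is a GA1 number if and only if $p=2$ or $p>5$.
   Context: For a positive integer $n$, $\sigma(n)=\sum_{d\mid n} d$. For integers $n>1$ define $G(n)=\dfrac{\sigma(n)}{n\log\log n}$ (natural logarithms). A positive integer $n$ is a GA1 number (GA number of the first kind) if $n$ is composite and $G(n)\ge G(n/p)$ for every prime $p$ dividing $n$. *)

theory Defs
  imports "HOL-Computational_Algebra.Primes" Complex_Main
begin

definition divisor_sigma :: "nat \<Rightarrow> nat" where
  "divisor_sigma n = (\<Sum>d\<in>{d. d dvd n}. d)"

definition G :: "nat \<Rightarrow> real" where
  "G n = real (divisor_sigma n) / (real n * ln (ln (real n)))"

definition GA1 :: "nat \<Rightarrow> bool" where
  "GA1 n \<longleftrightarrow> n > 1 \<and> \<not> prime n \<and> (\<forall>p. prime p \<and> p dvd n \<longrightarrow> G n \<ge> G (n div p))"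

end

theory Submission
  imports Defs
begin

lemma sigma_prime: assumes "prime (p::nat)" shows "divisor_sigma p = p + 1"
proof -
  have "{d. d dvd p} = {1, p}"
    using assms by (auto simp: prime_nat_iff)
  moreover have "p \<noteq> 1" using assms by auto
  ultimately show ?thesis by (simp add: divisor_sigma_def)
qed

lemma sigma_4: "divisor_sigma 4 = 7"
proof -
  have "{d::nat. d dvd 4} = {1, 2, 4}"
  proof (rule set_eqI, rule iffI)
    fix d :: nat assume "d \<in> {d. d dvd 4}"
    hence "d dvd 4" by simp
    moreover have "d \<le> 4" using \<open>d dvd 4\<close> by (rule dvd_imp_le) simp
    hence "d \<in> {0,1,2,3,4}" by auto
    ultimately show "d \<in> {1,2,4}" by auto
  qed auto
  thus ?thesis by (simp add: divisor_sigma_def)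
qed

lemma sigma_2p: assumes "prime (p::nat)" "p \<noteq> 2" shows "divisor_sigma (2*p) = 3*(p+1)"
proof -
  have p2: "p > 2" using assms prime_ge_2_nat[of p] by linarith
  have "{d. d dvd 2*p} = {1, 2, p, 2*p}"
  proof (rule set_eqI, rule iffI)
    fix d assume "d \<in> {d. d dvd 2*p}"
    hence d: "d dvd 2*p" by simp
    show "d \<in> {1, 2, p, 2*p}"
    proof (cases "p dvd d")
      case True
      then obtain k where k: "d = p*k" by blast
      with d have "k dvd 2" using p2 by (simp add: mult.commute)
      hence "k = 1 \<or> k = 2" using prime_nat_iff[of 2] by auto
      thus ?thesis using k by auto
    next
      case False
      hence "coprime p d" using assms(1) by (simp add: prime_imp_coprime)
      hence "d dvd 2" using d by (metis coprime_commute coprime_dvd_mult_left_iff)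
      hence "d = 1 \<or> d = 2" using prime_nat_iff[of 2] by auto
      thus ?thesis by auto
    qed
  qed auto
  moreover have "(\<Sum>d\<in>{1, 2, p, 2*p}. d) = 3*(p+1)" using p2 by simp
  ultimately show ?thesis by (simp add: divisor_sigma_def)
qed




lemma ln2_lower: "ln (2::real) \<ge> 0.66"
proof -
  have "exp (0.0825::real) \<le> 1 + 0.0825 + 0.0825^2" by (rule exp_bound) auto
  hence "exp (0.0825::real) ^ 8 \<le> (1 + 0.0825 + 0.0825^2) ^ 8"
    by (rule power_mono) simp
  also have "\<dots> \<le> (2::real)" by (simp add: power2_eq_square eval_nat_numeral)
  also have "exp (0.0825::real) ^ 8 = exp (real 8 * 0.0825)" by (rule exp_of_nat_mult[symmetric])
  finally have "exp (0.66::real) \<le> 2" by simp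
  thus ?thesis by (metis exp_gt_zero ln_exp ln_le_cancel_iff zero_less_numeral)
qed

lemma ln2_upper: "ln (2::real) \<le> 0.75"
proof -
  have "(1 + 0.15::real) ^ 5 \<le> exp (0.15) ^ 5"
    by (rule power_mono) (use exp_ge_add_one_self[of "0.15::real"] in auto)
  moreover have "(2::real) \<le> (1 + 0.15) ^ 5" by (simp add: eval_nat_numeral)
  moreover have "exp (0.15::real) ^ 5 = exp (real 5 * 0.15)" by (rule exp_of_nat_mult[symmetric])
  ultimately have "2 \<le> exp (real 5 * 0.15::real)" by linarith
  hence "2 \<le> exp (0.75::real)" by simp
  thus ?thesis by (metis exp_gt_zero ln_exp ln_le_cancel_iff zero_less_numeral)
qed

lemma ln_pow_le: assumes "(a::nat)^m \<le> b^n" "a > 0" "b > 0" shows "real m * ln (real a) \<le> real n * ln (real b)"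
proof -
  have "real a ^ m \<le> real b ^ n" using assms(1) by (metis of_nat_le_iff of_nat_power)
  hence "ln (real a ^ m) \<le> ln (real b ^ n)" using assms by (simp)
  thus ?thesis using assms \<open>b>0\<close> by (simp add: ln_realpow)
qed

lemma ln3: "5 * ln (3::real) \<le> 8 * ln 2" "19 * ln 2 \<le> 12 * ln (3::real)"
  using ln_pow_le[of 3 5 2 8] ln_pow_le[of 2 19 3 12] by auto
lemma ln5: "3 * ln (5::real) \<le> 7 * ln 2"
  using ln_pow_le[of 5 3 2 7] by auto
lemma ln7: "14 * ln (2::real) \<le> 5 * ln 7"
  using ln_pow_le[of 2 14 7 5] by auto

lemma K3: "ln (3::real) ^ 3 < (ln 2 + ln 3)^2"
proof -
  have c: "0.66 \<le> ln (2::real)" "ln (2::real) \<le> 0.75" by (rule ln2_lower, rule ln2_upper)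
  have a: "5 * ln (3::real) \<le> 8 * ln 2" by (rule ln3)
  have b: "ln (3::real) > 0" by simp
  define x where "x = ln (3::real)"
  define y where "y = ln (2::real)"
  have h: "x \<le> 1.6 * y" "0.66 \<le> y" "y \<le> 0.75" "x > 0" using a b c unfolding x_def[symmetric] y_def[symmetric] by auto
  have "x * x^2 \<le> (8/5) * x^2" using h by (intro mult_right_mono) auto
  hence 1: "x^3 \<le> (8/5) * x^2" by (simp add: power2_eq_square power3_eq_cube)
  have "x * x \<le> ((8/5) * y) * x" using h by (intro mult_right_mono) auto
  hence 2: "x^2 \<le> (8/5) * (x*y)" by (simp add: power2_eq_square algebra_simps)
  have 3: "x * y > 0" "y^2 \<ge> 0" using h by auto
  have "x^3 < x^2 + 2*(x*y) + y^2" using 1 2 3 by linarith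
  hence "x^3 < (y + x)^2" by (simp add: power2_sum algebra_simps)
  thus ?thesis unfolding x_def y_def by simp
qed

lemma K5: "ln (5::real) ^ 3 < (ln 2 + ln 5)^2"
proof -
  have c: "0.66 \<le> ln (2::real)" "ln (2::real) \<le> 0.75" by (rule ln2_lower, rule ln2_upper)
  have a: "3 * ln (5::real) \<le> 7 * ln 2" by (rule ln5)
  have b: "ln (5::real) > 0" by simp
  define x where "x = ln (5::real)"
  define y where "y = ln (2::real)"
  have h: "3 * x \<le> 7 * y" "0.66 \<le> y" "y \<le> 0.75" "x > 0" using a b c unfolding x_def[symmetric] y_def[symmetric] by auto
  have "x * x^2 \<le> (7/4) * x^2" using h by (intro mult_right_mono) auto
  hence 1: "x^3 \<le> (7/4) * x^2" by (simp add: power2_eq_square power3_eq_cube)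
  have "x * x \<le> ((7/3) * y) * x" using h by (intro mult_right_mono) auto
  hence 2: "x^2 \<le> (7/3) * (x*y)" by (simp add: power2_eq_square algebra_simps)
  have 3: "x * y > 0" "y^2 \<ge> 0" using h by auto
  have "x^3 < x^2 + 2*(x*y) + y^2" using 1 2 3 by linarith
  hence "x^3 < (y + x)^2" by (simp add: power2_sum algebra_simps)
  thus ?thesis unfolding x_def y_def by simp
qed

lemma K7: assumes "(p::nat) \<ge> 7" shows "(ln 2 + ln (real p))^2 \<le> ln (real p) ^ 3"
proof -
  have c: "0.66 \<le> ln (2::real)" by (rule ln2_lower)
  have a: "14 * ln (2::real) \<le> 5 * ln 7" by (rule ln7)
  have m: "ln 7 \<le> ln (real p)" using assms by simp
  define x where "x = ln (real p)"
  define y where "y = ln (2::real)"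
  have xy: "14 * y \<le> 5 * x" "0.66 \<le> y" using a c m unfolding x_def[symmetric] y_def[symmetric] by auto
  have x1: "x \<ge> 231/125" using xy by simp
  have "y + x \<le> (19/14) * x" using xy by linarith
  hence "(y+x)^2 \<le> ((19/14) * x)^2" using xy by (intro power_mono) auto
  also have "\<dots> = (361/196) * x^2" by (simp add: power2_eq_square)
  also have "\<dots> \<le> x * x^2" using x1 by (intro mult_right_mono) auto
  also have "\<dots> = x^3" by (simp add: power2_eq_square power3_eq_cube)
  finally show ?thesis unfolding x_def y_def by (simp add: add.commute)
qed


lemma lnln_pos: assumes "real n \<ge> 3" shows "ln (ln (real n)) > 0"
proof -
  have "19 * ln 2 \<le> 12 * ln (3::real)" by (rule ln3)
  moreover have "0.66 \<le> ln (2::real)" by (rule ln2_lower)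
  ultimately have "ln (3::real) > 1" by simp
  moreover have "ln 3 \<le> ln (real n)" using assms by simp
  ultimately show ?thesis by simp
qed

lemma G_compare: assumes "prime p" "p \<noteq> 2"
  shows "G (2*p) \<ge> G p \<longleftrightarrow> (ln 2 + ln (real p))^2 \<le> ln (real p) ^ 3"
proof -
  have p3: "p \<ge> 3" using assms prime_ge_2_nat[of p] by linarith
  define A where "A = ln (real p)"
  define B where "B = ln (real (2*p))"
  have B: "B = ln 2 + A" unfolding A_def B_def using p3 by (simp add: ln_mult)
  have L1: "ln A > 0" unfolding A_def using p3 by (intro lnln_pos) simp
  have L2: "ln B > 0" unfolding B_def using p3 by (intro lnln_pos) simp
  have A0: "A > 0" "B > 0" unfolding A_def B_def using p3 by auto
  have GG: "G (2*p) = 3*(real p+1) / (2 * real p * ln B)" "G p = (real p+1) / (real p * ln A)"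
    unfolding G_def B_def A_def using sigma_2p[OF assms] sigma_prime[OF assms(1)] by auto
  have pp: "real p > 0" using p3 by simp
  have "G (2*p) \<ge> G p \<longleftrightarrow> (real p+1) / (real p * ln A) \<le> 3*(real p+1) / (2 * real p * ln B)"
    using GG by simp
  also have "\<dots> \<longleftrightarrow> (real p+1) * (2 * real p * ln B) \<le> 3*(real p+1) * (real p * ln A)"
    using L1 L2 pp by (simp add: divide_le_eq le_divide_eq mult_pos_pos)
  also have "\<dots> \<longleftrightarrow> ((real p+1) * real p) * (2 * ln B) \<le> ((real p+1) * real p) * (3 * ln A)"
    by (simp add: algebra_simps)
  also have "\<dots> \<longleftrightarrow> 2 * ln B \<le> 3 * ln A"
    using pp by (intro mult_le_cancel_left_pos) simp
  also have "\<dots> \<longleftrightarrow> ln (B^2) \<le> ln (A^3)"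
    using A0 by (simp add: ln_realpow)
  also have "\<dots> \<longleftrightarrow> B^2 \<le> A^3" using A0 by simp
  finally show ?thesis unfolding B A_def .
qed

lemma G2_neg: "G 2 < 0"
proof -
  have "ln (2::real) < 1" using ln2_upper by simp
  hence "ln (ln (2::real)) < 0" by simp
  thus ?thesis unfolding G_def using sigma_prime[of 2] by (simp add: divide_pos_neg)
qed

lemma G_pos: assumes "n \<ge> 3" shows "G n > 0"
proof -
  have "divisor_sigma n > 0" unfolding divisor_sigma_def using assms
    by (intro sum_pos2[where i=n]) (auto intro: finite_subset[of _ "{..n}"] dvd_imp_le)
  thus ?thesis unfolding G_def using lnln_pos[of n] assms by simp
qed

theorem proposition3:
  fixes p :: nat
  assumes "prime p"
  shows "GA1 (2 * p) \<longleftrightarrow> p = 2 \<or> p > 5"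
proof -
  have p2: "p \<ge> 2" using assms prime_ge_2_nat by blast
  have np: "\<not> prime (2*p)" using p2 prime_product[of 2 p] by auto
  have q: "prime q \<and> q dvd 2*p \<longleftrightarrow> q = 2 \<or> q = p" for q
  proof
    assume h: "prime q \<and> q dvd 2*p"
    hence "q dvd 2 \<or> q dvd p" using prime_dvd_mult_iff by blast
    thus "q = 2 \<or> q = p" using h assms primes_dvd_imp_eq[of q 2] primes_dvd_imp_eq[of q p] by auto
  qed (use assms in auto)
  have e1: "GA1 (2*p) \<longleftrightarrow> G (2*p) \<ge> G 2 \<and> G (2*p) \<ge> G p"
    unfolding GA1_def using np p2 q by auto
  have "G (2*p) \<ge> G 2" using G2_neg G_pos[of "2*p"] p2 by linarith
  hence eq: "GA1 (2*p) \<longleftrightarrow> G (2*p) \<ge> G p" using e1 by simp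
  show ?thesis
  proof (cases "p = 2")
    case True
    thus ?thesis using eq G2_neg G_pos[of 4] by simp
  next
    case False
    note c = G_compare[OF assms False]
    have p3: "p \<ge> 3" using p2 False by linarith
    show ?thesis
    proof (cases "p > 5")
      case True
      have "p \<noteq> 6"
      proof
        assume "p = 6"
        hence "prime ((2::nat) * 3)" using assms by simp
        thus False using prime_product[of 2 3] by auto
      qed
      hence "p \<ge> 7" using True by linarith
      thus ?thesis using eq c K7[of p] True by simp
    next
      case f: False
      have "p \<noteq> 4"
      proof
        assume "p = 4"
        hence "prime ((2::nat) * 2)" using assms by simp
        thus False using prime_product[of 2 2] by auto
      qed
      hence "p = 3 \<or> p = 5" using p3 f by linarith
      thus ?thesis using eq c K3 K5 by auto
    qed
  qed
qed

end
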